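(* Let $h$ be a binary function symbol interpreted as associative and idempotent, let $a,b$ be distinct free constants, and let $x$ be a variable. Let $t = h(x,s_1,\ldots,s_n,x)$ with $n\ge 0$ and each $s_i\in\{x,a,b\}$ (an $(x,\{a,b\})$-simple word). Let $\sigma$ be a substitution with $x\sigma = s$, where $s\in\{h(a,b),h(b,a)\}$. Then $t\sigma \approx_{AI} s$.
   Context: Terms are built from a countable set of variables and a set of function symbols with fixed arities; substitutions map variables to terms, are the identity on all but finitely many variables, and are extended homomorphically to terms (written postfix, $t\sigma$). $AI$ denotes the equational theory generated by $h(x,h(y,z)) = h(h(x,y),z)$ and $h(x,x)=x$ for the symbol $h$ (all other symbols are free), and $s\approx_{AI} t$ means $s=t$ holds in every model of these axioms. Because $h$ is associative, $h(u_1,\ldots,u_m)$ for $m\ge 2$ denotes the flattened (any-bracketing) $h$-product of $u_1,\ldots,u_m$, and $h(u)$ denotes $u$. *)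

theory Defs
  imports Main
begin

datatype ('f, 'v) trm = Var 'v | Fun 'f "('f, 'v) trm list"

fun subst :: "('v \<Rightarrow> ('f, 'v) trm) \<Rightarrow> ('f, 'v) trm \<Rightarrow> ('f, 'v) trm" where
  "subst \<sigma> (Var y) = \<sigma> y"
| "subst \<sigma> (Fun f ts) = Fun f (map (subst \<sigma>) ts)"

fun hprod :: "'f \<Rightarrow> ('f, 'v) trm list \<Rightarrow> ('f, 'v) trm" where
  "hprod h [] = undefined"
| "hprod h [u] = u"
| "hprod h (u # v # us) = Fun h [u, hprod h (v # us)]"

fun eval :: "('f \<Rightarrow> 'a list \<Rightarrow> 'a) \<Rightarrow> ('v \<Rightarrow> 'a) \<Rightarrow> ('f, 'v) trm \<Rightarrow> 'a" where
  "eval I \<rho> (Var y) = \<rho> y"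
| "eval I \<rho> (Fun f ts) = I f (map (eval I \<rho>) ts)"

definition ai_model :: "'f \<Rightarrow> ('f \<Rightarrow> 'a list \<Rightarrow> 'a) \<Rightarrow> bool" where
  "ai_model h I \<longleftrightarrow>
     (\<forall>x y z. I h [x, I h [y, z]] = I h [I h [x, y], z]) \<and> (\<forall>x. I h [x, x] = x)"

end

theory Submission
  imports Defs
begin

lemma hprod_cons: "w \<noteq> [] \<Longrightarrow> hprod h (u # w) = Fun h [u, hprod h w]"
  by (cases w) auto

lemma band_suffix:
  fixes f :: "'a \<Rightarrow> 'a \<Rightarrow> 'a"
  assumes A: "\<And>x y z. f x (f y z) = f (f x y) z" and Id: "\<And>x. f x x = x"
    and cs: "set cs \<subseteq> {P, Q, f P Q}"
  shows "foldr f cs (f P Q) \<in> {f P Q, f Q (f P Q)}"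
  using cs
proof (induction cs)
  case Nil then show ?case by simp
next
  case (Cons c cs)
  have h1: "f P (f P Q) = f P Q" by (metis A Id)
  have h2: "f P (f Q (f P Q)) = f P Q" by (metis A Id)
  have h3: "f Q (f Q (f P Q)) = f Q (f P Q)" by (metis A Id)
  have h4: "f (f P Q) (f Q (f P Q)) = f P Q" by (metis A Id)
  from Cons show ?case using h1 h2 h3 h4 Id by auto
qed

lemma band_main:
  fixes f :: "'a \<Rightarrow> 'a \<Rightarrow> 'a"
  assumes A: "\<And>x y z. f x (f y z) = f (f x y) z" and Id: "\<And>x. f x x = x"
    and cs: "set cs \<subseteq> {P, Q, f P Q}"
  shows "f (f P Q) (foldr f cs (f P Q)) = f P Q"
proof -
  have "f (f P Q) (f Q (f P Q)) = f P Q" by (metis A Id)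
  then show ?thesis using band_suffix[OF A Id cs] Id by auto
qed

theorem lemma1:
  fixes h a b :: 'f and x :: 'v and ss :: "('f, 'v) trm list"
    and \<sigma> :: "'v \<Rightarrow> ('f, 'v) trm" and s :: "('f, 'v) trm"
  assumes "a \<noteq> b" and "h \<noteq> a" and "h \<noteq> b"
    and "set ss \<subseteq> {Var x, Fun a [], Fun b []}"
    and "finite {y. \<sigma> y \<noteq> Var y}"
    and "s \<in> {Fun h [Fun a [], Fun b []], Fun h [Fun b [], Fun a []]}"
    and "\<sigma> x = s"
  shows "\<forall>(I :: 'f \<Rightarrow> 'a list \<Rightarrow> 'a) (\<rho> :: 'v \<Rightarrow> 'a). ai_model h I \<longrightarrow>
           eval I \<rho> (subst \<sigma> (hprod h ([Var x] @ ss @ [Var x]))) = eval I \<rho> s"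
proof (intro allI impI)
  fix I :: "'f \<Rightarrow> 'a list \<Rightarrow> 'a" and \<rho> :: "'v \<Rightarrow> 'a"
  assume m: "ai_model h I"
  define f where "f = (\<lambda>u v. I h [u, v])"
  have A: "\<And>x y z. f x (f y z) = f (f x y) z" and Id: "\<And>x. f x x = x"
    using m unfolding ai_model_def f_def by auto
  define E where "E = (\<lambda>t. eval I \<rho> (subst \<sigma> t))"
  have gen: "\<And>ys. ys \<noteq> [] \<Longrightarrow> E (hprod h ys) = foldr f (butlast (map E ys)) (last (map E ys))"
  proof -
    fix ys :: "('f,'v) trm list"
    show "ys \<noteq> [] \<Longrightarrow> E (hprod h ys) = foldr f (butlast (map E ys)) (last (map E ys))"
    proof (induction ys)
      case Nil then show ?case by simp
    next
      case (Cons y ys)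
      show ?case
      proof (cases ys)
        case Nil then show ?thesis by simp
      next
        case (Cons z zs)
        then show ?thesis using Cons.IH hprod_cons[of ys h y]
          by (simp add: E_def f_def)
      qed
    qed
  qed
  let ?X = "eval I \<rho> s"
  have Ex: "E (Var x) = ?X" using assms(7) by (simp add: E_def)
  have val: "E (hprod h ([Var x] @ ss @ [Var x])) = f ?X (foldr f (map E ss) ?X)"
    using gen[of "[Var x] @ ss @ [Var x]"] Ex by (simp add: butlast_append)
  define Pa where "Pa = I a []"
  define Pb where "Pb = I b []"
  have Ea: "E (Fun a []) = Pa" and Eb: "E (Fun b []) = Pb" by (simp_all add: E_def Pa_def Pb_def)
  have "?X = f Pa Pb \<or> ?X = f Pb Pa"
    using assms(6) by (auto simp: f_def Pa_def Pb_def)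
  then have "f ?X (foldr f (map E ss) ?X) = ?X"
  proof
    assume X: "?X = f Pa Pb"
    have "set (map E ss) \<subseteq> {Pa, Pb, f Pa Pb}" using assms(4) Ex Ea Eb X by auto
    from band_main[OF A Id this] X show ?thesis by simp
  next
    assume X: "?X = f Pb Pa"
    have "set (map E ss) \<subseteq> {Pb, Pa, f Pb Pa}" using assms(4) Ex Ea Eb X by auto
    from band_main[OF A Id this] X show ?thesis by simp
  qed
  then show "eval I \<rho> (subst \<sigma> (hprod h ([Var x] @ ss @ [Var x]))) = eval I \<rho> s"
    using val by (simp add: E_def)
qed

end
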